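(* Let $g_0,g_\infty\in\mathbb C$, $g_1=-g_0-g_\infty$, and let $G(t,z)$ be the EGF of the GKP triangle $\left[\begin{array}{cc|c}\tfrac12,&1&g_0\\ -1,&-1&g_\infty\end{array}\right]$ (the case $(r_0,r_1,r_\infty)=(-\tfrac12,-\tfrac12,2)$). Then near $(0,0)$ $$G(t,z)=\Bigl(\frac{s_+}{t}\Bigr)^{g_0}\Bigl(\frac{s_-}{1-t}\Bigr)^{g_1},\qquad s_\pm=\frac12\pm\frac{4(t-\frac12)+z}{2\sqrt{4+8(t-\frac12)z+z^2}},$$ with the square root the branch equal to $2$ at $z=0$ and the powers the principal branches equal to $1$ at $z=0$ (so $s_++s_-=1$, $s_+=t$ at $z=0$).
   Context: GKP triangle: for complex parameters $\alpha,\beta,\gamma,\alpha',\beta',\gamma'$, the array $T_{n,k}=\left[\begin{array}{cc|c}\alpha,&\beta&\gamma\\ \alpha',&\beta'&\gamma'\end{array}\right]_{n,k}$ is defined by $T_{0,0}=1$, $T_{n,k}=0$ if $n<0$, $k<0$ or $k>n$, and $T_{n+1,k+1}=[\alpha n+\beta(k+1)+\gamma]T_{n,k+1}+[\alpha' n+\beta' k+\gamma']T_{n,k}$ for $n\ge0$, $k\in\mathbb Z$; its EGF is $G(t,z)=\sum_{n\ge0}\sum_{k=0}^nT_{n,k}t^kz^n/n!$. *)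

theory Defs
  imports "HOL-Analysis.Analysis"
begin

text \<open>GKP triangle with parameters a b c a' b' c' (alpha, beta, gamma, alpha', beta', gamma').\<close>
fun gkp :: "complex \<Rightarrow> complex \<Rightarrow> complex \<Rightarrow> complex \<Rightarrow> complex \<Rightarrow> complex \<Rightarrow> nat \<Rightarrow> int \<Rightarrow> complex" where
  "gkp a b c a' b' c' 0 k = (if k = 0 then 1 else 0)"
| "gkp a b c a' b' c' (Suc n) k =
     (if k < 0 \<or> k > int (Suc n) then 0
      else (a * of_nat n + b * of_int k + c) * gkp a b c a' b' c' n k
         + (a' * of_nat n + b' * of_int (k - 1) + c') * gkp a b c a' b' c' n (k - 1))"

text \<open>Square root branch equal to 2 at z = 0 (principal csqrt, valid near (0,0)).\<close>
definition sroot5 :: "complex \<Rightarrow> complex \<Rightarrow> complex" where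
  "sroot5 t z = csqrt (4 + 8 * (t - 1/2) * z + z^2)"

definition s_plus5 :: "complex \<Rightarrow> complex \<Rightarrow> complex" where
  "s_plus5 t z = 1/2 + (4 * (t - 1/2) + z) / (2 * sroot5 t z)"

definition s_minus5 :: "complex \<Rightarrow> complex \<Rightarrow> complex" where
  "s_minus5 t z = 1/2 - (4 * (t - 1/2) + z) / (2 * sroot5 t z)"

end

theory Submission
  imports Defs "HOL-Complex_Analysis.Complex_Analysis"
begin



definition Qf :: "complex \<Rightarrow> complex \<Rightarrow> complex" where
  "Qf t z = 4 + 8*(t-1/2)*z + z^2"
definition Rf :: "complex \<Rightarrow> complex \<Rightarrow> complex" where
  "Rf t z = csqrt (Qf t z)"
definition Wf :: "complex \<Rightarrow> complex \<Rightarrow> complex" where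
  "Wf t z = (4*(t-1/2)+z) / Rf t z"

lemma Rf_sq: "(Rf t z)^2 = Qf t z" by (simp add: Rf_def)

lemma Wz_deriv:
  assumes "Qf t z \<notin> \<real>\<^sub>\<le>\<^sub>0"
  shows "((\<lambda>z. Wf t z) has_field_derivative 16*t*(1-t)/(Rf t z)^3) (at z)"
proof -
  have R0: "Rf t z \<noteq> 0" using assms by (auto simp: Rf_def)
  have "((\<lambda>z. (4*(t-1/2)+z) / csqrt (4 + 8*(t-1/2)*z + z^2)) has_field_derivative
     (1 * Rf t z - (4*(t-1/2)+z) * ((8*(t-1/2) + 2*z) / (2 * Rf t z))) / (Rf t z * Rf t z)) (at z)"
    using assms R0 unfolding Rf_def Qf_def
    by (auto intro!: derivative_eq_intros)
  moreover have "(1 * Rf t z - (4*(t-1/2)+z) * ((8*(t-1/2) + 2*z) / (2 * Rf t z))) / (Rf t z * Rf t z)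
      = 16*t*(1-t)/(Rf t z)^3"
  proof -
    have "(1 * Rf t z - (4*(t-1/2)+z) * ((8*(t-1/2) + 2*z) / (2 * Rf t z))) / (Rf t z * Rf t z)
        = ((Rf t z)^2 - (4*(t-1/2)+z) * (4*(t-1/2) + z)) / (Rf t z)^3"
      using R0 by (simp add: field_simps power2_eq_square power3_eq_cube)
    also have "\<dots> = 16*t*(1-t)/(Rf t z)^3" unfolding Rf_sq Qf_def
      by (simp add: algebra_simps power2_eq_square)
    finally show ?thesis .
  qed
  ultimately show ?thesis unfolding Wf_def Rf_def Qf_def by simp
qed

lemma Wt_deriv:
  assumes "Qf t z \<notin> \<real>\<^sub>\<le>\<^sub>0"
  shows "((\<lambda>t. Wf t z) has_field_derivative 16*(1+(t-1/2)*z)/(Rf t z)^3) (at t)"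
proof -
  have R0: "Rf t z \<noteq> 0" using assms by (auto simp: Rf_def)
  have "((\<lambda>t. (4*(t-1/2)+z) / csqrt (4 + 8*(t-1/2)*z + z^2)) has_field_derivative
     (4 * Rf t z - (4*(t-1/2)+z) * ((8*z) / (2 * Rf t z))) / (Rf t z * Rf t z)) (at t)"
    using assms R0 unfolding Rf_def Qf_def
    by (auto intro!: derivative_eq_intros)
  moreover have "(4 * Rf t z - (4*(t-1/2)+z) * ((8*z) / (2 * Rf t z))) / (Rf t z * Rf t z)
      = 16*(1+(t-1/2)*z)/(Rf t z)^3"
  proof -
    have "(4 * Rf t z - (4*(t-1/2)+z) * ((8*z) / (2 * Rf t z))) / (Rf t z * Rf t z)
        = (4*(Rf t z)^2 - (4*(t-1/2)+z) * (4*z)) / (Rf t z)^3"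
      using R0 by (simp add: field_simps power2_eq_square power3_eq_cube)
    also have "\<dots> = 16*(1+(t-1/2)*z)/(Rf t z)^3" unfolding Rf_sq Qf_def
      by (simp add: algebra_simps power2_eq_square)
    finally show ?thesis .
  qed
  ultimately show ?thesis unfolding Wf_def Rf_def Qf_def by simp
qed


definition Af :: "complex \<Rightarrow> complex \<Rightarrow> complex" where
  "Af t z = (1 + Wf t z)/(2*t)"
definition Bf :: "complex \<Rightarrow> complex \<Rightarrow> complex" where
  "Bf t z = (1 - Wf t z)/(2*(1-t))"
definition Ff :: "complex \<Rightarrow> complex \<Rightarrow> complex \<Rightarrow> complex \<Rightarrow> complex" where
  "Ff g0 g1 t z = exp (g0 * Ln (Af t z) + g1 * Ln (Bf t z))"
definition good :: "complex \<Rightarrow> complex \<Rightarrow> bool" where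
  "good t z \<longleftrightarrow> Qf t z \<notin> \<real>\<^sub>\<le>\<^sub>0 \<and> t \<noteq> 0 \<and> t \<noteq> 1 \<and> Af t z \<notin> \<real>\<^sub>\<le>\<^sub>0 \<and> Bf t z \<notin> \<real>\<^sub>\<le>\<^sub>0"
definition Lz :: "complex \<Rightarrow> complex \<Rightarrow> complex \<Rightarrow> complex \<Rightarrow> complex" where
  "Lz g0 g1 t z = g0 * (16*t*(1-t)/(Rf t z)^3) / (1 + Wf t z) - g1 * (16*t*(1-t)/(Rf t z)^3) / (1 - Wf t z)"
definition Lt :: "complex \<Rightarrow> complex \<Rightarrow> complex \<Rightarrow> complex \<Rightarrow> complex" where
  "Lt g0 g1 t z = g0 * ((16*(1+(t-1/2)*z)/(Rf t z)^3) / (1 + Wf t z) - 1/t)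
     + g1 * (- (16*(1+(t-1/2)*z)/(Rf t z)^3) / (1 - Wf t z) + 1/(1-t))"

lemma good_facts:
  assumes "good t z"
  shows "1 + Wf t z \<noteq> 0" "1 - Wf t z \<noteq> 0" "t \<noteq> 0" "1 - t \<noteq> 0" "Rf t z \<noteq> 0"
  using assms unfolding good_def Af_def Bf_def Rf_def by auto

lemma Fz_deriv:
  assumes "good t z"
  shows "((\<lambda>z. Ff g0 g1 t z) has_field_derivative Ff g0 g1 t z * Lz g0 g1 t z) (at z)"
proof -
  note f = good_facts[OF assms]
  have q: "Qf t z \<notin> \<real>\<^sub>\<le>\<^sub>0" "Af t z \<notin> \<real>\<^sub>\<le>\<^sub>0" "Bf t z \<notin> \<real>\<^sub>\<le>\<^sub>0" using assms by (auto simp: good_def)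
  define K where "K = 16*t*(1-t)/(Rf t z)^3"
  define W where "W = Wf t z"
  have dW: "((\<lambda>z. Wf t z) has_field_derivative K) (at z)" using Wz_deriv[OF q(1)] unfolding K_def .
  have f': "1 + W \<noteq> 0" "1 - W \<noteq> 0" "t \<noteq> 0" "1 - t \<noteq> 0" using f unfolding W_def by auto
  have h: "((\<lambda>z. g0 * Ln (Af t z) + g1 * Ln (Bf t z)) has_field_derivative
      g0 * K / (1 + W) - g1 * K / (1 - W)) (at z)"
    using q unfolding Af_def Bf_def 
    apply (auto intro!: derivative_eq_intros dW)
    using f' unfolding W_def[symmetric] by (simp add: field_simps)
  have "Lz g0 g1 t z = g0 * K / (1 + W) - g1 * K / (1 - W)" unfolding Lz_def K_def W_def by simp
  then show ?thesis unfolding Ff_def using DERIV_fun_exp[OF h] by simp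
qed

lemma alg_e1:
  fixes a t K :: complex assumes "a \<noteq> 0" "t \<noteq> 0"
  shows "inverse (a/(2*t)) * ((K*(2*t) - a*2)/((2*t)*(2*t))) = K/a - 1/t"
  using assms by (simp add: field_simps)

lemma alg_e2:
  fixes b u K :: complex assumes "b \<noteq> 0" "u \<noteq> 0"
  shows "inverse (b/(2*u)) * (((-K)*(2*u) + b*2)/((2*u)*(2*u))) = - K/b + 1/u"
  using assms by (simp add: field_simps)

lemma alg_pde:
  fixes a b t c K1 K2 g0 g1 :: complex
  assumes "a \<noteq> 0" "b \<noteq> 0" "t \<noteq> 0" "1 - t \<noteq> 0" "c * K1 = t*(1-t)*K2"
  shows "c * (g0*K1/a - g1*K1/b) = t*(1-t)*(g0*(K2/a - 1/t) + g1*(-K2/b+1/(1-t))) + (g0*(1-t) - g1*t)"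
proof -
  have "c * (g0*K1/a - g1*K1/b) = g0*(c*K1)/a - g1*(c*K1)/b" by (simp add: algebra_simps)
  also have "\<dots> = g0*(t*(1-t)*K2)/a - g1*(t*(1-t)*K2)/b" using assms(5) by simp
  also have "\<dots> = t*(1-t)*(g0*(K2/a - 1/t) + g1*(-K2/b+1/(1-t))) + (g0*(1-t) - g1*t)"
    using assms(1-4) by (simp add: field_simps)
  finally show ?thesis .
qed

lemma Ft_deriv:
  assumes "good t z"
  shows "((\<lambda>t. Ff g0 g1 t z) has_field_derivative Ff g0 g1 t z * Lt g0 g1 t z) (at t)"
proof -
  note f = good_facts[OF assms]
  have q: "Qf t z \<notin> \<real>\<^sub>\<le>\<^sub>0" "Af t z \<notin> \<real>\<^sub>\<le>\<^sub>0" "Bf t z \<notin> \<real>\<^sub>\<le>\<^sub>0" using assms by (auto simp: good_def)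
  define K where "K = 16*(1+(t-1/2)*z)/(Rf t z)^3"
  define W where "W = Wf t z"
  have dW: "((\<lambda>t. Wf t z) has_field_derivative K) (at t)" using Wt_deriv[OF q(1)] unfolding K_def .
  have f': "1 + W \<noteq> 0" "1 - W \<noteq> 0" "t \<noteq> 0" "1 - t \<noteq> 0" using f unfolding W_def by auto
  have dA: "((\<lambda>t. Af t z) has_field_derivative (K*(2*t) - (1+W)*2)/((2*t)*(2*t))) (at t)"
    unfolding Af_def W_def using f' by (auto intro!: derivative_eq_intros dW)
  have dB: "((\<lambda>t. Bf t z) has_field_derivative ((-K)*(2*(1-t)) + (1-W)*2)/((2*(1-t))*(2*(1-t)))) (at t)"
    unfolding Bf_def W_def using f' by (auto intro!: derivative_eq_intros dW)
  have e1: "inverse (Af t z) * ((K*(2*t) - (1+W)*2)/((2*t)*(2*t))) = K/(1+W) - 1/t"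
    unfolding Af_def W_def[symmetric] by (rule alg_e1) (use f' in auto)
  have e2: "inverse (Bf t z) * (((-K)*(2*(1-t)) + (1-W)*2)/((2*(1-t))*(2*(1-t)))) = - K/(1-W) + 1/(1-t)"
    unfolding Bf_def W_def[symmetric] by (rule alg_e2) (use f' in auto)
  have lA: "((\<lambda>t. Ln (Af t z)) has_field_derivative K/(1+W) - 1/t) (at t)"
    using DERIV_chain2[OF has_field_derivative_Ln[OF q(2)] dA] e1 by simp
  have lB: "((\<lambda>t. Ln (Bf t z)) has_field_derivative - K/(1-W) + 1/(1-t)) (at t)"
    using DERIV_chain2[OF has_field_derivative_Ln[OF q(3)] dB] e2 by simp
  have h: "((\<lambda>t. g0 * Ln (Af t z) + g1 * Ln (Bf t z)) has_field_derivative
      g0 * (K / (1 + W) - 1/t) + g1 * (- K / (1 - W) + 1/(1-t))) (at t)"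
    by (rule DERIV_add[OF DERIV_cmult[OF lA] DERIV_cmult[OF lB]])
  have "Lt g0 g1 t z = g0 * (K / (1 + W) - 1/t) + g1 * (- K / (1 - W) + 1/(1-t))" unfolding Lt_def K_def W_def by simp
  then show ?thesis unfolding Ff_def using DERIV_fun_exp[OF h] by simp
qed

lemma PDE:
  assumes "good t z"
  shows "(1+(t-1/2)*z) * (Ff g0 (-g0-ginf) t z * Lz g0 (-g0-ginf) t z)
     = t*(1-t) * (Ff g0 (-g0-ginf) t z * Lt g0 (-g0-ginf) t z) + (g0 + ginf*t) * Ff g0 (-g0-ginf) t z"
proof -
  note f = good_facts[OF assms]
  have cK: "(1+(t-1/2)*z) * (16*t*(1-t)/(Rf t z)^3) = t*(1-t)*(16*(1+(t-1/2)*z)/(Rf t z)^3)"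
    by (simp only: times_divide_eq_right) (rule arg_cong[where f="\<lambda>x. x / (Rf t z)^3"], algebra)
  have "(1+(t-1/2)*z) * Lz g0 (-g0-ginf) t z = t*(1-t) * Lt g0 (-g0-ginf) t z + (g0*(1-t) - (-g0-ginf)*t)"
    unfolding Lz_def Lt_def by (rule alg_pde) (use f cK in simp_all)
  also have "g0*(1-t) - (-g0-ginf)*t = g0 + ginf*t" by (simp add: algebra_simps)
  finally have E: "(1+(t-1/2)*z) * Lz g0 (-g0-ginf) t z = t*(1-t) * Lt g0 (-g0-ginf) t z + (g0 + ginf*t)" .
  have "(1+(t-1/2)*z) * (Ff g0 (-g0-ginf) t z * Lz g0 (-g0-ginf) t z) = 
     Ff g0 (-g0-ginf) t z * ((1+(t-1/2)*z) * Lz g0 (-g0-ginf) t z)" by (simp only: ac_simps)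
  also have "\<dots> = Ff g0 (-g0-ginf) t z * (t*(1-t) * Lt g0 (-g0-ginf) t z + (g0 + ginf*t))" by (simp only: E)
  also have "\<dots> = t*(1-t) * (Ff g0 (-g0-ginf) t z * Lt g0 (-g0-ginf) t z) + (g0 + ginf*t) * Ff g0 (-g0-ginf) t z"
    by (simp only: algebra_simps)
  finally show ?thesis .
qed




lemma cont_ball:
  fixes f :: "complex \<times> complex \<Rightarrow> complex"
  assumes "isCont f (0,0)" "e > 0"
  shows "\<exists>d>0. \<forall>t z. cmod t < d \<and> cmod z < d \<longrightarrow> cmod (f (t,z) - f (0,0)) < e"
proof -
  from LIM_D[OF assms(1)[unfolded isCont_def] assms(2)] obtain s where s: "s > 0"
    "\<And>x. x \<noteq> (0,0) \<and> norm (x - (0,0)) < s \<Longrightarrow> norm (f x - f (0,0)) < e" by blast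
  show ?thesis
  proof (intro exI[of _ "s/2"] conjI allI impI)
    fix t z :: complex assume tz: "cmod t < s/2 \<and> cmod z < s/2"
    show "cmod (f (t,z) - f (0,0)) < e"
    proof (cases "(t,z) = (0,0)")
      case True then show ?thesis using assms(2) by simp
    next
      case False
      have "norm ((t,z) - (0,0)) \<le> cmod t + cmod z" using norm_Pair_le[of t z] by simp
      also have "\<dots> < s" using tz by simp
      finally show ?thesis using s(2)[of "(t,z)"] False by blast
    qed
  qed (use s in auto)
qed

definition Ap :: "complex \<Rightarrow> complex \<Rightarrow> complex" where
  "Ap t z = 8*(1-t)/(Rf t z * (Rf t z + 2 - z - 4*t))"

lemma csqrt_4: "csqrt 4 = 2"
  by (rule csqrt_unique) auto

lemma Qf00: "Qf 0 0 = 4" by (simp add: Qf_def)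
lemma Rf00: "Rf 0 0 = 2" by (simp add: Rf_def Qf00 csqrt_4)

lemma four_not_nonpos: "(4::complex) \<notin> \<real>\<^sub>\<le>\<^sub>0" by (simp add: complex_nonpos_Reals_iff)

lemma isCont_Rf: "isCont (\<lambda>p. Rf (fst p) (snd p)) (0,0)"
  unfolding Rf_def
proof (rule isCont_csqrt')
  show "isCont (\<lambda>p. Qf (fst p) (snd p)) (0, 0)" unfolding Qf_def by (intro continuous_intros)
  show "Qf (fst (0::complex, 0::complex)) (snd (0::complex, 0::complex)) \<notin> \<real>\<^sub>\<le>\<^sub>0"
    using four_not_nonpos by (simp add: Qf00)
qed

lemma eps_exists:
  "\<exists>\<epsilon>>0. \<forall>t z. cmod t < \<epsilon> \<and> cmod z < \<epsilon> \<longrightarrow>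
      cmod (Qf t z - 4) < 1 \<and> cmod (Ap t z - 1) < 1/2 \<and> cmod (Bf t z - 1) < 1/2"
proof -
  have c1: "isCont (\<lambda>p. Qf (fst p) (snd p)) (0,0)" unfolding Qf_def by (intro continuous_intros)
  have c2: "isCont (\<lambda>p. Ap (fst p) (snd p)) (0,0)" unfolding Ap_def
    by (intro continuous_intros isCont_Rf) (simp add: Rf00)
  have c3: "isCont (\<lambda>p. Bf (fst p) (snd p)) (0,0)" unfolding Bf_def Wf_def
    by (intro continuous_intros isCont_Rf) (simp_all add: Rf00)
  have v2: "Ap 0 0 = 1" by (simp add: Ap_def Rf00)
  have v3: "Bf 0 0 = 1" by (simp add: Bf_def Wf_def Rf00)
  obtain d1 where d1: "d1 > 0" "\<forall>t z. cmod t < d1 \<and> cmod z < d1 \<longrightarrow> cmod (Qf t z - 4) < 1"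
    using cont_ball[OF c1, of 1] Qf00 by auto
  obtain d2 where d2: "d2 > 0" "\<forall>t z. cmod t < d2 \<and> cmod z < d2 \<longrightarrow> cmod (Ap t z - 1) < 1/2"
    using cont_ball[OF c2, of "1/2"] v2 by auto
  obtain d3 where d3: "d3 > 0" "\<forall>t z. cmod t < d3 \<and> cmod z < d3 \<longrightarrow> cmod (Bf t z - 1) < 1/2"
    using cont_ball[OF c3, of "1/2"] v3 by auto
  show ?thesis
    by (rule exI[of _ "min d1 (min d2 d3)"]) (use d1 d2 d3 in auto)
qed

lemma near1: fixes w :: complex assumes "cmod (w - 1) < 1/2" shows "w \<notin> \<real>\<^sub>\<le>\<^sub>0" "w \<noteq> 0"
proof -
  have "- Re (w - 1) \<le> \<bar>Re (w - 1)\<bar>" by (rule abs_ge_minus_self)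
  also have "\<dots> \<le> cmod (w - 1)" by (rule abs_Re_le_cmod)
  finally have "- Re (w - 1) < 1/2" using assms by linarith
  then have "Re w > 0" by simp
  then show "w \<notin> \<real>\<^sub>\<le>\<^sub>0" "w \<noteq> 0" by (auto simp: complex_nonpos_Reals_iff)
qed

lemma aux_cancel: fixes t R D :: complex assumes "t \<noteq> 0" "R \<noteq> 0" "D \<noteq> 0"
  shows "16*t*(1-t)/(2*t*R*D) = 8*(1-t)/(R*D)"
  using assms by (simp add: field_simps)

lemma Af_eq_Ap:
  assumes "t \<noteq> 0" "Ap t z \<noteq> 0"
  shows "Af t z = Ap t z"
proof -
  have R: "Rf t z \<noteq> 0" and D: "Rf t z + 2 - z - 4*t \<noteq> 0" using assms(2) by (auto simp: Ap_def)
  have key: "(Rf t z + (4*t-2+z)) * (Rf t z + 2 - z - 4*t) = 16*t*(1-t)"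
  proof -
    have "(Rf t z + (4*t-2+z)) * (Rf t z + 2 - z - 4*t) = (Rf t z)^2 - (4*t-2+z)^2"
      by (simp add: algebra_simps power2_eq_square)
    also have "\<dots> = 16*t*(1-t)" unfolding Rf_sq Qf_def by (simp add: algebra_simps power2_eq_square)
    finally show ?thesis .
  qed
  have "Af t z = (Rf t z + (4*t-2+z)) / (2*t*Rf t z)"
    unfolding Af_def Wf_def using R assms(1) by (simp add: field_simps)
  also have "\<dots> = (Rf t z + (4*t-2+z)) * (Rf t z + 2 - z - 4*t) / (2*t*Rf t z * (Rf t z + 2 - z - 4*t))"
    using D by simp
  also have "\<dots> = 16*t*(1-t) / (2*t*Rf t z * (Rf t z + 2 - z - 4*t))" by (simp only: key)
  also have "\<dots> = Ap t z" unfolding Ap_def using assms(1) R D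
    by (rule aux_cancel)
  finally show ?thesis .
qed

lemma good_from_bounds:
  assumes "cmod (Qf t z - 4) < 1" "cmod (Ap t z - 1) < 1/2" "cmod (Bf t z - 1) < 1/2" "t \<noteq> 0"
  shows "good t z"
proof -
  have "- Re (Qf t z - 4) \<le> \<bar>Re (Qf t z - 4)\<bar>" by (rule abs_ge_minus_self)
  also have "\<dots> \<le> cmod (Qf t z - 4)" by (rule abs_Re_le_cmod)
  finally have "- Re (Qf t z - 4) < 1" using assms(1) by linarith
  then have q: "Qf t z \<notin> \<real>\<^sub>\<le>\<^sub>0" by (auto simp: complex_nonpos_Reals_iff)
  have b: "Bf t z \<notin> \<real>\<^sub>\<le>\<^sub>0" "Bf t z \<noteq> 0" using near1[OF assms(3)] by auto
  then have t1: "t \<noteq> 1" by (auto simp: Bf_def)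
  have a: "Ap t z \<notin> \<real>\<^sub>\<le>\<^sub>0" "Ap t z \<noteq> 0" using near1[OF assms(2)] by auto
  have "Af t z = Ap t z" by (rule Af_eq_Ap) (use assms(4) a in auto)
  then show ?thesis unfolding good_def using q b t1 a assms(4) by auto
qed




lemma norm_circ0: "r \<ge> 0 \<Longrightarrow> cmod (circlepath 0 r x) = r"
  by (simp add: circlepath norm_mult norm_exp_eq_Re)

lemma cauchy_coeff:
  fixes h :: "complex \<Rightarrow> complex"
  assumes "h holomorphic_on ball 0 \<rho>" "0 < r" "r < \<rho>"
  shows "(deriv^^n) h 0 = fact n / (2*pi*\<i>) *
     integral {0..1} (\<lambda>x. h (circlepath 0 r x) / (circlepath 0 r x)^(Suc n) * vector_derivative (circlepath 0 r) (at x))"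
proof -
  have "cball 0 r \<subseteq> ball (0::complex) \<rho>" using assms by auto
  then have c: "continuous_on (cball 0 r) h" "h holomorphic_on ball 0 r"
    using assms(1) holomorphic_on_subset holomorphic_on_imp_continuous_on by (blast, force)
  have "((\<lambda>u. h u / (u-0)^(Suc n)) has_contour_integral ((2*pi*\<i>) / (fact n) * (deriv^^n) h 0)) (circlepath 0 r)"
    by (rule Cauchy_has_contour_integral_higher_derivative_circlepath[OF c]) (use assms in simp)
  then have "contour_integral (circlepath 0 r) (\<lambda>u. h u / u^(Suc n)) = (2*pi*\<i>) / (fact n) * (deriv^^n) h 0"
    using contour_integral_unique by simp
  then show ?thesis unfolding contour_integral_integral by (simp add: field_simps)
qed

lemma param_deriv:
  fixes f g :: "complex \<Rightarrow> complex \<Rightarrow> complex"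
  assumes S: "open S" and r: "0 < r" "r < \<rho>"
    and hol: "\<And>t. t \<in> S \<Longrightarrow> f t holomorphic_on ball 0 \<rho>"
    and holg: "\<And>t. t \<in> S \<Longrightarrow> g t holomorphic_on ball 0 \<rho>"
    and der: "\<And>t w. t \<in> S \<Longrightarrow> cmod w = r \<Longrightarrow> ((\<lambda>t. f t w) has_field_derivative g t w) (at t)"
    and cont: "continuous_on (S \<times> sphere 0 r) (\<lambda>p. g (fst p) (snd p))"
    and t0: "t0 \<in> S"
  shows "((\<lambda>t. (deriv^^n) (f t) 0) has_field_derivative (deriv^^n) (g t0) 0) (at t0)"
proof -
  obtain e where e: "e > 0" "ball t0 e \<subseteq> S" using S t0 open_contains_ball by blast
  define U where "U = ball t0 e"
  define \<gamma> where "\<gamma> = circlepath (0::complex) r"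
  define vd where "vd = (\<lambda>x::real. 2 * pi * \<i> * r * exp(2 * of_real pi * \<i> * x))"
  have vdeq: "vector_derivative \<gamma> (at x) = vd x" for x unfolding \<gamma>_def vd_def by (rule vector_derivative_circlepath)
  have g_norm: "cmod (\<gamma> x) = r" for x unfolding \<gamma>_def using norm_circ0 r by simp
  have g_nz: "\<gamma> x \<noteq> 0" for x using g_norm[of x] r by auto
  have g_cont: "continuous_on A \<gamma>" for A unfolding \<gamma>_def circlepath by (intro continuous_intros)
  have vd_cont: "continuous_on A vd" for A unfolding vd_def by (intro continuous_intros)
  have sph_sub: "sphere 0 r \<subseteq> ball (0::complex) \<rho>" using r by auto
  have cf: "continuous_on A (\<lambda>x. h (\<gamma> x) / (\<gamma> x)^(Suc n) * vd x)" if "h holomorphic_on ball 0 \<rho>" for h A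
  proof -
    have "continuous_on (sphere 0 r) h" using that sph_sub holomorphic_on_imp_continuous_on holomorphic_on_subset by blast
    then have "continuous_on A (\<lambda>x. h (\<gamma> x))"
      by (rule continuous_on_compose2[OF _ g_cont]) (auto simp: g_norm)
    then show ?thesis using g_nz by (intro continuous_intros g_cont vd_cont) auto
  qed
  define I where "I = (\<lambda>h. integral {0..1} (\<lambda>x. h (\<gamma> x) / (\<gamma> x)^(Suc n) * vd x))"
  have ci: "(deriv^^n) h 0 = fact n / (2*pi*\<i>) * I h" if "h holomorphic_on ball 0 \<rho>" for h
    using cauchy_coeff[OF that r] unfolding I_def \<gamma>_def[symmetric] vdeq .
  have L: "((\<lambda>t. integral (cbox 0 1) (\<lambda>x. f t (\<gamma> x) / (\<gamma> x)^(Suc n) * vd x)) has_field_derivative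
          integral (cbox 0 1) (\<lambda>x. g t0 (\<gamma> x) / (\<gamma> x)^(Suc n) * vd x)) (at t0 within U)"
  proof (rule leibniz_rule_field_derivative)
    fix t :: complex and x :: real assume "t \<in> U" "x \<in> cbox 0 1"
    then have tS: "t \<in> S" using e U_def by auto
    have d: "((\<lambda>t. f t (\<gamma> x)) has_field_derivative g t (\<gamma> x)) (at t within U)"
      using der[OF tS g_norm] by (rule has_field_derivative_at_within)
    show "((\<lambda>t. f t (\<gamma> x) / (\<gamma> x)^(Suc n) * vd x) has_field_derivative g t (\<gamma> x) / (\<gamma> x)^(Suc n) * vd x) (at t within U)"
      by (intro DERIV_cmult_right DERIV_cdivide d)
  next
    fix t assume "t \<in> U"
    then have "t \<in> S" using e U_def by auto
    then show "(\<lambda>x. f t (\<gamma> x) / (\<gamma> x)^(Suc n) * vd x) integrable_on cbox 0 1"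
      using cf[OF hol] by (intro integrable_continuous) auto
  next
    have "continuous_on (U \<times> cbox 0 1) (\<lambda>p. (\<lambda>p. g (fst p) (snd p)) (fst p, \<gamma> (snd p)))"
    proof (rule continuous_on_compose2[OF cont])
      show "continuous_on (U \<times> cbox 0 1) (\<lambda>p. (fst p, \<gamma> (snd p)))"
        by (intro continuous_intros continuous_on_compose2[OF g_cont]) auto
      show "(\<lambda>p. (fst p, \<gamma> (snd p))) ` (U \<times> cbox 0 1) \<subseteq> S \<times> sphere 0 r"
        using e U_def g_norm by auto
    qed
    then have "continuous_on (U \<times> cbox 0 1) (\<lambda>p. g (fst p) (\<gamma> (snd p)) / (\<gamma> (snd p))^(Suc n) * vd (snd p))"
      using g_nz by (auto intro!: continuous_intros continuous_on_compose2[OF g_cont] continuous_on_compose2[OF vd_cont])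
    then show "continuous_on (U \<times> cbox 0 1) (\<lambda>(t, x). g t (\<gamma> x) / (\<gamma> x)^(Suc n) * vd x)"
      by (simp add: case_prod_unfold)
  next
    show "t0 \<in> U" "convex U" using e U_def by auto
  qed
  have oU: "open U" unfolding U_def by simp
  have t0U: "t0 \<in> U" using e U_def by auto
  have L2: "((\<lambda>t. fact n / (2*pi*\<i>) * I (f t)) has_field_derivative fact n / (2*pi*\<i>) * I (g t0)) (at t0)"
    using DERIV_cmult[OF L[unfolded at_within_open[OF t0U oU]], of "fact n / (2*pi*\<i>)"]
    unfolding I_def by (simp add: cbox_interval)
  show ?thesis
  proof (rule has_field_derivative_transform_within_open[OF _ oU t0U])
    show "((\<lambda>t. fact n / (2*pi*\<i>) * I (f t)) has_field_derivative (deriv^^n) (g t0) 0) (at t0)"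
      using L2 ci[OF holg[OF t0]] by simp
    fix t assume "t \<in> U"
    then have "t \<in> S" using e U_def by auto
    then show "fact n / (2*pi*\<i>) * I (f t) = (deriv^^n) (f t) 0" using ci[OF hol] by simp
  qed
qed




lemma gkp_out:
  "k < 0 \<or> k > int n \<Longrightarrow> gkp a b c a' b' c' n k = 0"
  by (induction n arbitrary: k) auto

definition TT :: "complex \<Rightarrow> complex \<Rightarrow> nat \<Rightarrow> int \<Rightarrow> complex" where
  "TT g0 ginf n k = gkp (1/2) 1 g0 (-1) (-1) ginf n k"

definition pp :: "complex \<Rightarrow> complex \<Rightarrow> nat \<Rightarrow> complex \<Rightarrow> complex" where
  "pp g0 ginf n t = (\<Sum>k\<le>n. TT g0 ginf n (int k) * t^k)"

definition dpp :: "complex \<Rightarrow> complex \<Rightarrow> nat \<Rightarrow> complex \<Rightarrow> complex" where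
  "dpp g0 ginf n t = (\<Sum>k\<le>n. TT g0 ginf n (int k) * (of_nat k * t^(k-1)))"

lemma pp_deriv: "((\<lambda>t. pp g0 ginf n t) has_field_derivative dpp g0 ginf n t) (at t)"
  unfolding pp_def dpp_def
  by (auto intro!: derivative_eq_intros sum.cong)

lemma pp_0: "pp g0 ginf 0 t = 1"
  by (simp add: pp_def TT_def)

lemma TT_rec:
  assumes "k \<le> Suc n"
  shows "TT g0 ginf (Suc n) (int k) = (of_nat n/2 + of_nat k + g0) * TT g0 ginf n (int k)
     + (ginf - of_nat n - (of_nat k - 1)) * TT g0 ginf n (int k - 1)"
  using assms unfolding TT_def by (simp add: algebra_simps)

lemma pp_rec:
  "pp g0 ginf (Suc n) t = (of_nat n/2 - of_nat n*t + g0 + ginf*t) * pp g0 ginf n t + t*(1-t) * dpp g0 ginf n t"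
proof -
  define T where "T = TT g0 ginf n"
  define G where "G = (\<lambda>k::nat. (of_nat n/2 + g0 + of_nat k) * T (int k) * t^k + (ginf - of_nat n - of_nat k) * T (int k) * t^(Suc k))"
  have Tout: "T (int n + 1) = 0" "T (1 + int n) = 0" "T (-1) = 0" unfolding T_def TT_def by (auto intro!: gkp_out)
  have "pp g0 ginf (Suc n) t = (\<Sum>k\<le>Suc n. (of_nat n/2 + of_nat k + g0) * T (int k) * t^k)
       + (\<Sum>k\<le>Suc n. (ginf - of_nat n - (of_nat k - 1)) * T (int k - 1) * t^k)"
    unfolding pp_def T_def by (simp add: TT_rec sum.distrib[symmetric] algebra_simps)
  also have "(\<Sum>k\<le>Suc n. (of_nat n/2 + of_nat k + g0) * T (int k) * t^k) = (\<Sum>k\<le>n. (of_nat n/2 + of_nat k + g0) * T (int k) * t^k)"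
    using Tout by simp
  also have "(\<Sum>k\<le>Suc n. (ginf - of_nat n - (of_nat k - 1)) * T (int k - 1) * t^k)
      = (\<Sum>k\<le>n. (ginf - of_nat n - of_nat k) * T (int k) * t^(Suc k))"
    by (subst sum.atMost_Suc_shift) (simp add: Tout algebra_simps)
  also have "(\<Sum>k\<le>n. (of_nat n/2 + of_nat k + g0) * T (int k) * t^k) + (\<Sum>k\<le>n. (ginf - of_nat n - of_nat k) * T (int k) * t^(Suc k))
      = (\<Sum>k\<le>n. G k)" unfolding G_def by (subst sum.distrib[symmetric]) (simp add: algebra_simps)
  also have "\<dots> = (\<Sum>k\<le>n. (of_nat n/2 - of_nat n*t + g0 + ginf*t) * (T (int k) * t^k) + t*(1-t) * (T (int k) * (of_nat k * t^(k-1))))"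
  proof (rule sum.cong[OF refl])
    fix k assume "k \<in> {..n}"
    have e: "t * (of_nat k * t^(k-1)) = of_nat k * t^k" by (cases k) auto
    have "t*(1-t) * (T (int k) * (of_nat k * t^(k-1))) = (1-t) * T (int k) * (t * (of_nat k * t^(k-1)))"
      by (simp add: algebra_simps)
    also have "\<dots> = (1-t) * T (int k) * (of_nat k * t^k)" by (simp only: e)
    finally show "G k = (of_nat n/2 - of_nat n*t + g0 + ginf*t) * (T (int k) * t^k) + t*(1-t) * (T (int k) * (of_nat k * t^(k-1)))"
      unfolding G_def by (simp add: algebra_simps)
  qed
  also have "\<dots> = (of_nat n/2 - of_nat n*t + g0 + ginf*t) * pp g0 ginf n t + t*(1-t) * dpp g0 ginf n t"
    unfolding pp_def dpp_def T_def by (simp add: sum.distrib sum_distrib_left)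
  finally show ?thesis .
qed




lemma cont_Ft:
  assumes "\<And>p. p \<in> A \<Longrightarrow> good (fst p) (snd p)"
  shows "continuous_on A (\<lambda>p. Ff g0 g1 (fst p) (snd p) * Lt g0 g1 (fst p) (snd p))"
proof -
  have gf: "Qf (fst p) (snd p) \<notin> \<real>\<^sub>\<le>\<^sub>0" "fst p \<noteq> 0" "fst p \<noteq> 1"
    "Af (fst p) (snd p) \<notin> \<real>\<^sub>\<le>\<^sub>0" "Bf (fst p) (snd p) \<notin> \<real>\<^sub>\<le>\<^sub>0"
    "1 + Wf (fst p) (snd p) \<noteq> 0" "1 - Wf (fst p) (snd p) \<noteq> 0" "Rf (fst p) (snd p) \<noteq> 0"
    if "p \<in> A" for p using assms[OF that] good_facts[OF assms[OF that]] by (auto simp: good_def)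
  have cQ: "continuous_on A (\<lambda>p. Qf (fst p) (snd p))" unfolding Qf_def by (intro continuous_intros)
  have cR: "continuous_on A (\<lambda>p. Rf (fst p) (snd p))" unfolding Rf_def
    by (rule continuous_on_compose2[OF continuous_on_csqrt cQ]) (use gf in auto)
  have cW: "continuous_on A (\<lambda>p. Wf (fst p) (snd p))" unfolding Wf_def
    using gf by (intro continuous_intros cR) auto
  have cA: "continuous_on A (\<lambda>p. Af (fst p) (snd p))" unfolding Af_def
    using gf by (intro continuous_intros cW) auto
  have cB: "continuous_on A (\<lambda>p. Bf (fst p) (snd p))" unfolding Bf_def
    using gf by (intro continuous_intros cW) auto
  have cF: "continuous_on A (\<lambda>p. Ff g0 g1 (fst p) (snd p))" unfolding Ff_def
    using gf by (intro continuous_intros cA cB) auto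
  have cL: "continuous_on A (\<lambda>p. Lt g0 g1 (fst p) (snd p))" unfolding Lt_def
    using gf by (intro continuous_intros cW cR) auto
  show ?thesis by (intro continuous_intros cF cL)
qed

lemma Ff_t0:
  assumes "t \<noteq> 0" "t \<noteq> 1"
  shows "Ff g0 g1 t 0 = 1"
proof -
  have "Rf t 0 = 2" by (simp add: Rf_def Qf_def csqrt_4)
  then have W: "Wf t 0 = 2*t - 1" by (simp add: Wf_def field_simps)
  have "Af t 0 = 1" using assms(1) by (simp add: Af_def W)
  moreover have "Bf t 0 = 1" using assms(2) by (simp add: Bf_def W)
  ultimately show ?thesis by (simp add: Ff_def)
qed

theorem main_aux:
  fixes g0 ginf :: complex
  shows "\<exists>\<epsilon>>0. \<forall>t z. cmod t < \<epsilon> \<and> cmod z < \<epsilon> \<and> t \<noteq> 0 \<longrightarrow>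
     good t z \<and> (\<lambda>n. pp g0 ginf n t * z ^ n / fact n) sums Ff g0 (-g0-ginf) t z"
proof -
  define g1 where "g1 = -g0-ginf"
  obtain \<epsilon> where eps: "\<epsilon> > 0" "\<And>t z. cmod t < \<epsilon> \<and> cmod z < \<epsilon> \<Longrightarrow>
      cmod (Qf t z - 4) < 1 \<and> cmod (Ap t z - 1) < 1/2 \<and> cmod (Bf t z - 1) < 1/2"
    using eps_exists by blast
  define S where "S = ball (0::complex) \<epsilon> - {0}"
  have oS: "open S" unfolding S_def by auto
  have gd: "good t z" if "t \<in> S" "z \<in> ball 0 \<epsilon>" for t z
    using eps(2)[of t z] that good_from_bounds unfolding S_def by auto
  define F where "F = (\<lambda>t z. Ff g0 g1 t z)"
  define Gz where "Gz = (\<lambda>t z. Ff g0 g1 t z * Lz g0 g1 t z)"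
  define Gt where "Gt = (\<lambda>t z. Ff g0 g1 t z * Lt g0 g1 t z)"
  have dz: "((F t) has_field_derivative Gz t z) (at z)" if "t \<in> S" "z \<in> ball 0 \<epsilon>" for t z
    unfolding F_def Gz_def using Fz_deriv[OF gd[OF that]] .
  have holF: "F t holomorphic_on ball 0 \<epsilon>" if "t \<in> S" for t
    unfolding holomorphic_on_def field_differentiable_def
    using dz[OF that] has_field_derivative_at_within by blast
  have derivF: "deriv (F t) z = Gz t z" if "t \<in> S" "z \<in> ball 0 \<epsilon>" for t z
    using DERIV_imp_deriv[OF dz[OF that]] .
  have holGz: "Gz t holomorphic_on ball 0 \<epsilon>" if "t \<in> S" for t
  proof -
    have "deriv (F t) holomorphic_on ball 0 \<epsilon>" by (rule holomorphic_deriv[OF holF[OF that]]) simp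
    then show ?thesis by (rule holomorphic_transform) (use derivF that in auto)
  qed
  have pde: "(1+(t-1/2)*z) * Gz t z = t*(1-t) * Gt t z + (g0 + ginf*t) * F t z"
    if "t \<in> S" "z \<in> ball 0 \<epsilon>" for t z
    unfolding Gz_def Gt_def F_def g1_def using PDE[OF gd[OF that]] .
  have t01: "t \<noteq> 0" "1 - t \<noteq> 0" if "t \<in> S" for t
    using good_facts[OF gd[OF that, of 0]] eps(1) by auto
  have holGt: "Gt t holomorphic_on ball 0 \<epsilon>" if "t \<in> S" for t
  proof -
    have "(\<lambda>z. ((1+(t-1/2)*z) * Gz t z - (g0 + ginf*t) * F t z) / (t*(1-t))) holomorphic_on ball 0 \<epsilon>"
      using t01[OF that] by (intro holomorphic_intros holGz[OF that] holF[OF that]) auto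
    then show ?thesis
    proof (rule holomorphic_transform)
      fix z :: complex assume "z \<in> ball 0 \<epsilon>"
      then have p: "(1+(t-1/2)*z) * Gz t z = t*(1-t) * Gt t z + (g0 + ginf*t) * F t z"
        using pde[OF that] by blast
      have "(1+(t-1/2)*z) * Gz t z - (g0 + ginf*t) * F t z = (t*(1-t)) * Gt t z"
        using p by simp
      then show "((1+(t-1/2)*z) * Gz t z - (g0 + ginf*t) * F t z) / (t*(1-t)) = Gt t z"
        using t01[OF that] by simp
    qed
  qed
  define a where "a = (\<lambda>n t. (deriv^^n) (F t) 0 / fact n)"
  define b where "b = (\<lambda>n t. (deriv^^n) (Gt t) 0 / fact n)"
  have ader: "((a n) has_field_derivative b n t) (at t)" if "t \<in> S" for n t
  proof -
    have "((\<lambda>t. (deriv^^n) (F t) 0) has_field_derivative (deriv^^n) (Gt t) 0) (at t)"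
    proof (rule param_deriv[OF oS _ _ holF holGt _ _ that, of "\<epsilon>/2"])
      show "0 < \<epsilon>/2" "\<epsilon>/2 < \<epsilon>" using eps(1) by auto
      fix t w assume "t \<in> S" "cmod w = \<epsilon>/2"
      then have "good t w" using gd[of t w] eps(1) by auto
      then show "((\<lambda>t. F t w) has_field_derivative Gt t w) (at t)"
        unfolding F_def Gt_def by (rule Ft_deriv)
    next
      show "continuous_on (S \<times> sphere 0 (\<epsilon>/2)) (\<lambda>p. Gt (fst p) (snd p))"
        unfolding Gt_def by (rule cont_Ft) (use gd eps(1) in auto)
    qed
    then show ?thesis unfolding a_def b_def by (rule DERIV_cdivide)
  qed
  have coeff: "of_nat (Suc n) * a (Suc n) t + (t-1/2) * of_nat n * a n t = t*(1-t) * b n t + (g0 + ginf*t) * a n t"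
    if "t \<in> S" for n t
  proof -
    define E where "E = fps_expansion (F t) 0"
    define EG where "EG = fps_expansion (Gt t) 0"
    have e1: "F t has_fps_expansion E" unfolding E_def
      by (rule has_fps_expansion_fps_expansion[OF _ _ holF[OF that]]) (use eps(1) in auto)
    have e2: "Gt t has_fps_expansion EG" unfolding EG_def
      by (rule has_fps_expansion_fps_expansion[OF _ _ holGt[OF that]]) (use eps(1) in auto)
    have h1: "(\<lambda>z. (1+(t-1/2)*z) * deriv (F t) z) has_fps_expansion (1 + fps_const (t-1/2) * fps_X) * fps_deriv E"
      by (intro has_fps_expansion_mult has_fps_expansion_add has_fps_expansion_deriv e1
          has_fps_expansion_cmult_left has_fps_expansion_fps_X has_fps_expansion_1)
    have h2: "(\<lambda>z. t*(1-t) * Gt t z + (g0 + ginf*t) * F t z) has_fps_expansion fps_const (t*(1-t)) * EG + fps_const (g0 + ginf*t) * E"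
      by (intro has_fps_expansion_add has_fps_expansion_cmult_left e1 e2)
    have ev: "eventually (\<lambda>z. (1+(t-1/2)*z) * deriv (F t) z = t*(1-t) * Gt t z + (g0 + ginf*t) * F t z) (nhds 0)"
    proof -
      have "eventually (\<lambda>z. z \<in> ball 0 \<epsilon>) (nhds (0::complex))"
        using eps(1) by (intro eventually_nhds_in_open) auto
      then show ?thesis by eventually_elim (use derivF pde that in auto)
    qed
    have h1': "(\<lambda>z. t*(1-t) * Gt t z + (g0 + ginf*t) * F t z) has_fps_expansion (1 + fps_const (t-1/2) * fps_X) * fps_deriv E"
      using h1 has_fps_expansion_cong[OF ev refl] by blast
    have eq: "(1 + fps_const (t-1/2) * fps_X) * fps_deriv E = fps_const (t*(1-t)) * EG + fps_const (g0 + ginf*t) * E"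
      by (rule fps_expansion_unique_complex[OF h1' h2])
    have "fps_nth ((1 + fps_const (t-1/2) * fps_X) * fps_deriv E) n
         = of_nat (Suc n) * fps_nth E (Suc n) + (t-1/2) * of_nat n * fps_nth E n"
      by (cases n) (simp_all add: algebra_simps)
    moreover have "fps_nth (fps_const (t*(1-t)) * EG + fps_const (g0 + ginf*t) * E) n
         = t*(1-t) * fps_nth EG n + (g0 + ginf*t) * fps_nth E n" by simp
    moreover have "fps_nth E m = a m t" for m unfolding E_def a_def by (simp add: fps_expansion_def)
    moreover have "fps_nth EG m = b m t" for m unfolding EG_def b_def by (simp add: fps_expansion_def)
    ultimately show ?thesis using eq by metis
  qed
  have ind: "\<forall>t\<in>S. a n t = pp g0 ginf n t / fact n" for n
  proof (induction n)
    case 0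
    show ?case
    proof
      fix t assume "t \<in> S"
      then have "t \<noteq> 0" "t \<noteq> 1" using t01 by auto
      then show "a 0 t = pp g0 ginf 0 t / fact 0" unfolding a_def F_def by (simp add: Ff_t0 pp_0)
    qed
  next
    case (Suc n)
    show ?case
    proof
      fix t assume tS: "t \<in> S"
      have d1: "((\<lambda>t. pp g0 ginf n t / fact n) has_field_derivative dpp g0 ginf n t / fact n) (at t)"
        by (intro DERIV_cdivide pp_deriv)
      have d2: "((\<lambda>t. pp g0 ginf n t / fact n) has_field_derivative b n t) (at t)"
        by (rule has_field_derivative_transform_within_open[OF ader[OF tS] oS tS]) (use Suc in auto)
      have bn: "b n t = dpp g0 ginf n t / fact n" using DERIV_unique[OF d2 d1] .
      have an: "a n t = pp g0 ginf n t / fact n" using Suc tS by auto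
      have "of_nat (Suc n) * a (Suc n) t = t*(1-t) * b n t + (g0 + ginf*t) * a n t - (t-1/2) * of_nat n * a n t"
        using coeff[OF tS, of n] by (simp add: algebra_simps)
      also have "\<dots> = ((of_nat n/2 - of_nat n*t + g0 + ginf*t) * pp g0 ginf n t + t*(1-t) * dpp g0 ginf n t) / fact n"
        unfolding bn an by (simp add: field_simps)
      also have "\<dots> = pp g0 ginf (Suc n) t / fact n" by (simp only: pp_rec)
      finally have "of_nat (Suc n) * a (Suc n) t = pp g0 ginf (Suc n) t / fact n" .
      then show "a (Suc n) t = pp g0 ginf (Suc n) t / fact (Suc n)"
        by (simp add: field_simps del: of_nat_Suc)
    qed
  qed
  show ?thesis
  proof (rule exI[of _ \<epsilon>], rule conjI[OF eps(1)], intro allI impI)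
    fix t z assume tz: "cmod t < \<epsilon> \<and> cmod z < \<epsilon> \<and> t \<noteq> 0"
    then have tS: "t \<in> S" and zb: "z \<in> ball 0 \<epsilon>" unfolding S_def by auto
    have "(\<lambda>n. (deriv ^^ n) (F t) 0 / fact n * (z - 0)^n) sums F t z"
      by (rule holomorphic_power_series[OF holF[OF tS] zb])
    moreover have "(\<lambda>n. (deriv ^^ n) (F t) 0 / fact n * (z - 0)^n) = (\<lambda>n. pp g0 ginf n t * z ^ n / fact n)"
    proof
      fix n
      have "(deriv ^^ n) (F t) 0 / fact n = pp g0 ginf n t / fact n"
        using ind[of n] tS unfolding a_def by blast
      then show "(deriv ^^ n) (F t) 0 / fact n * (z - 0)^n = pp g0 ginf n t * z ^ n / fact n"
        by simp
    qed
    ultimately show "good t z \<and> (\<lambda>n. pp g0 ginf n t * z ^ n / fact n) sums Ff g0 (-g0-ginf) t z"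
      unfolding F_def g1_def using gd[OF tS zb] by simp
  qed
qed


theorem mainTheorem5:
  fixes g0 ginf :: complex
  shows "\<exists>\<epsilon>>0. \<forall>t z. cmod t < \<epsilon> \<and> cmod z < \<epsilon> \<and> t \<noteq> 0 \<longrightarrow>
     (\<lambda>n. (\<Sum>k\<le>n. gkp (1/2) 1 g0 (-1) (-1) ginf n (int k) * t ^ k) * z ^ n / of_nat (fact n))
       sums ((s_plus5 t z / t) powr g0 * (s_minus5 t z / (1 - t)) powr (- g0 - ginf))"
proof -
  obtain \<epsilon> where eps: "\<epsilon> > 0" "\<forall>t z. cmod t < \<epsilon> \<and> cmod z < \<epsilon> \<and> t \<noteq> 0 \<longrightarrow>
     good t z \<and> (\<lambda>n. pp g0 ginf n t * z ^ n / fact n) sums Ff g0 (-g0-ginf) t z"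
    using main_aux[of g0 ginf] by blast
  show ?thesis
  proof (intro exI[of _ \<epsilon>] conjI allI impI)
    show "\<epsilon> > 0" by (rule eps(1))
    fix t z assume tz: "cmod t < \<epsilon> \<and> cmod z < \<epsilon> \<and> t \<noteq> 0"
    then have g: "good t z" and s: "(\<lambda>n. pp g0 ginf n t * z ^ n / fact n) sums Ff g0 (-g0-ginf) t z"
      using eps(2) by auto
    have R: "sroot5 t z = Rf t z" by (simp add: sroot5_def Rf_def Qf_def)
    note gf = good_facts[OF g]
    have A: "s_plus5 t z / t = Af t z"
      unfolding s_plus5_def R Af_def Wf_def using gf by (simp add: field_simps)
    have B: "s_minus5 t z / (1 - t) = Bf t z"
      unfolding s_minus5_def R Bf_def Wf_def using gf by (simp add: field_simps)
    have nz: "Af t z \<noteq> 0" "Bf t z \<noteq> 0" using g unfolding good_def by auto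
    have val: "(s_plus5 t z / t) powr g0 * (s_minus5 t z / (1 - t)) powr (- g0 - ginf) = Ff g0 (-g0-ginf) t z"
      unfolding A B Ff_def using nz by (simp add: powr_def exp_add)
    have hfun: "(\<lambda>n. (\<Sum>k\<le>n. gkp (1/2) 1 g0 (-1) (-1) ginf n (int k) * t ^ k) * z ^ n / of_nat (fact n))
       = (\<lambda>n. pp g0 ginf n t * z ^ n / fact n)"
      unfolding pp_def TT_def by simp
    show "(\<lambda>n. (\<Sum>k\<le>n. gkp (1/2) 1 g0 (-1) (-1) ginf n (int k) * t ^ k) * z ^ n / of_nat (fact n))
       sums ((s_plus5 t z / t) powr g0 * (s_minus5 t z / (1 - t)) powr (- g0 - ginf))"
      unfolding hfun val by (rule s)
  qed
qed



end
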